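(* Let $Y$ be a continuous random variable supported on $[0,\infty)$ whose density $f$ satisfies $f(t)\le Ce^{-\lambda t}$ for all $t\ge0$, for some $C,\lambda>0$. There are constants $\epsilon,\gamma,I>0$, depending only on $C,\lambda$, such that $\mathbb{E}[e^{-sY}]\ne 1$ for every complex $s\ne 0$ with $\Re s\ge -\gamma$, and furthermore $|\mathbb{E}[e^{-sY}]-1| \ge \epsilon\min(|s|,1)$ for every complex $s$ with $|\Re s|\le\gamma$. *)

theory Defs
  imports "HOL-Probability.Probability"
begin

end

theory Submission
  imports Defs
begin


lemma exp_int:
  fixes c :: real assumes c: "c > 0"
  shows "(\<integral>\<^sup>+t. ennreal (exp (- c * t)) * indicator {0..} t \<partial>lborel) = ennreal (1 / c)"
proof -
  have "(\<integral>\<^sup>+t. ennreal (exp (- c * t)) * indicator {0..} t \<partial>lborel)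
      = ennreal \<bar>1/c\<bar> * (\<integral>\<^sup>+x. ennreal (exp (- c * (0 + (1/c) * x))) * indicator {0..} (0 + (1/c) * x) \<partial>lborel)"
    by (rule nn_integral_real_affine) (use c in auto)
  also have "(\<lambda>x. ennreal (exp (- c * (0 + (1/c) * x))) * indicator {0..} (0 + (1/c) * x) :: ennreal)
      = (\<lambda>x. ennreal (x^0 * exp (-x)) * indicator {0..} x)"
    using c by (auto simp: fun_eq_iff split: split_indicator simp: zero_le_divide_iff)
  also have "(\<integral>\<^sup>+x. ennreal (x^0 * exp (-x)) * indicator {0..} x \<partial>lborel) = 1"
    using nn_intergal_power_times_exp_Ici[of 0] by simp
  finally show ?thesis using c by simp
qed

lemma lin_le_exp:
  fixes t b :: real assumes "0 \<le> t" "b > 0"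
  shows "t \<le> (1/b) * exp (b * t)"
proof -
  have "b * t \<le> exp (b * t)" using exp_ge_add_one_self[of "b*t"] by linarith
  then show ?thesis using assms by (simp add: field_simps)
qed

lemma norm_exp_taylor2:
  fixes z :: complex
  shows "norm (exp z - 1 - z) \<le> norm z ^ 2 * exp (norm z)"
proof -
  have sums: "(\<lambda>k. z ^ (k + 2) /\<^sub>R fact (k + 2)) sums (exp z - (\<Sum>k<2. z ^ k /\<^sub>R fact k))"
    by (intro sums_split_initial_segment exp_converges)
  have sn: "summable (\<lambda>k. norm (z ^ (k + 2) /\<^sub>R fact (k + 2)))"
    using summable_norm_exp[of z]
    by (intro summable_ignore_initial_segment) (auto simp: norm_power norm_divide divide_simps)
  have "exp z - 1 - z = (\<Sum>k. z ^ (k + 2) /\<^sub>R fact (k + 2))"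
    using sums by (simp add: sums_iff eval_nat_numeral)
  also have "norm \<dots> \<le> (\<Sum>k. norm (z ^ (k + 2) /\<^sub>R fact (k + 2)))"
    using sn by (rule summable_norm)
  also have "\<dots> \<le> (\<Sum>k. norm z ^ 2 * (norm z ^ k /\<^sub>R fact k))"
  proof (rule suminf_le)
    fix k
    have "norm (z ^ (k + 2) /\<^sub>R fact (k + 2)) = norm z ^ (k+2) / fact (k+2)"
      by (simp add: norm_power norm_mult divide_inverse mult_ac)
    also have "\<dots> = norm z ^ 2 * (norm z ^ k / fact (k+2))"
      by (simp add: power_add mult_ac power2_eq_square)
    also have "\<dots> \<le> norm z ^ 2 * (norm z ^ k / fact k)"
      by (intro mult_left_mono divide_left_mono fact_mono) auto
    finally show "norm (z ^ (k + 2) /\<^sub>R fact (k + 2)) \<le> norm z ^ 2 * (norm z ^ k /\<^sub>R fact k)"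
      by (simp add: divide_inverse)
  next
    show "summable (\<lambda>k. norm z ^ 2 * (norm z ^ k /\<^sub>R fact k))"
      using exp_converges[of "norm z"] by (intro summable_mult) (auto simp: sums_iff)
  qed (fact sn)
  also have "\<dots> = norm z ^ 2 * exp (norm z)"
    using sums_mult[OF exp_converges[of "norm z"], of "norm z ^ 2"] by (simp add: sums_iff)
  finally show ?thesis .
qed

lemma abs_one_minus_exp:
  fixes x :: real
  shows "\<bar>1 - exp x\<bar> \<le> \<bar>x\<bar> * exp \<bar>x\<bar>"
proof (cases "x \<ge> 0")
  case True
  have "exp (-x) \<ge> 1 - x" using exp_ge_add_one_self[of "-x"] by simp
  then have "1 \<ge> (1 - x) * exp x" by (simp add: exp_minus field_simps)
  then show ?thesis using True by (simp add: algebra_simps)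
next
  case False
  have "exp x \<ge> 1 + x" using exp_ge_add_one_self[of x] by simp
  moreover have "exp x \<le> 1" using False by simp
  moreover have "1 \<le> exp \<bar>x\<bar>" by simp
  ultimately show ?thesis using False
    by (smt (verit) mult_le_cancel_left1)
qed

lemma cos_window:
  fixes x \<beta> :: real
  assumes "0 < \<beta>" "\<beta> \<le> pi/2" "0 \<le> x" "x < 2*pi" "cos \<beta> < cos x"
  shows "x \<le> \<beta> \<or> 2*pi - \<beta> \<le> x"
proof (rule ccontr)
  assume "\<not> (x \<le> \<beta> \<or> 2*pi - \<beta> \<le> x)"
  then have x: "\<beta> < x" "x < 2*pi - \<beta>" by auto
  show False
  proof (cases "x \<le> pi")
    case True
    then have "cos x \<le> cos \<beta>" using x assms by (intro cos_monotone_0_pi_le) auto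
    then show False using assms by simp
  next
    case False
    then have "cos (2*pi - x) \<le> cos \<beta>" using x assms by (intro cos_monotone_0_pi_le) auto
    then show False using assms by simp
  qed
qed

locale lem9 = prob_space M for M :: "'a measure" +
  fixes Y :: "'a \<Rightarrow> real" and f :: "real \<Rightarrow> real" and C lam :: real
  assumes D: "distributed M lborel Y (\<lambda>t. ennreal (f t))"
  and fnn: "\<And>t. 0 \<le> f t" and Ypos: "AE x in M. 0 \<le> Y x"
  and fb: "\<And>t. t \<ge> 0 \<Longrightarrow> f t \<le> C * exp (- lam * t)"
  and Cpos: "C > 0" and lampos: "lam > 0"
begin

lemma Ym: "Y \<in> measurable M lborel" using D by (simp add: distributed_def)
lemma Ymb[measurable]: "Y \<in> borel_measurable M" using Ym by simp

lemma nn_bound: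
  assumes [measurable]: "h \<in> borel_measurable borel"
  shows "(\<integral>\<^sup>+x. h (Y x) \<partial>M) \<le> (\<integral>\<^sup>+t. ennreal (C * exp (- lam * t)) * indicator {0..} t * h t \<partial>lborel)"
proof -
  have dd: "distr M lborel Y = density lborel (\<lambda>t. ennreal (f t))" using D by (simp add: distributed_def)
  have "(\<integral>\<^sup>+x. h (Y x) \<partial>M) = (\<integral>\<^sup>+t. h t \<partial>distr M lborel Y)"
    by (simp add: nn_integral_distr Ym)
  also have "\<dots> = (\<integral>\<^sup>+t. ennreal (f t) * h t \<partial>lborel)"
    using D by (simp add: dd nn_integral_density distributed_def)
  also have "\<dots> \<le> (\<integral>\<^sup>+t. ennreal (C * exp (- lam * t)) * indicator {0..} t * h t \<partial>lborel)"
  proof (rule nn_integral_mono_AE)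
    have "AE t in distr M lborel Y. 0 \<le> t" using Ypos by (subst AE_distr_iff) (auto simp: Ym)
    then have "AE t in density lborel (\<lambda>t. ennreal (f t)). 0 \<le> t" by (simp only: dd)
    then have "AE t in lborel. 0 < ennreal (f t) \<longrightarrow> 0 \<le> t"
      by (subst (asm) AE_density) (use D in \<open>simp add: distributed_def\<close>)
    then show "AE t in lborel. ennreal (f t) * h t \<le> ennreal (C * exp (- lam * t)) * indicator {0..} t * h t"
    proof eventually_elim
      case (elim t)
      show ?case
      proof (cases "0 \<le> t")
        case True
        then show ?thesis using fb[OF True] by (auto intro!: mult_right_mono ennreal_leI)
      next
        case False
        then have "f t = 0" using elim fnn[of t] by (cases "f t > 0") auto
        then show ?thesis by simp
      qed
    qed
  qed
  finally show ?thesis .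
qed

lemma int_bound:
  fixes G :: "real \<Rightarrow> real"
  assumes [measurable]: "G \<in> borel_measurable borel" and Knn: "0 \<le> K" and Gnn: "\<And>t. 0 \<le> G t"
    and K: "(\<integral>\<^sup>+t. ennreal (C * exp (- lam * t)) * indicator {0..} t * ennreal (G t) \<partial>lborel) \<le> ennreal K"
  shows "integrable M (\<lambda>x. G (Y x))" "expectation (\<lambda>x. G (Y x)) \<le> K"
proof -
  have nn: "(\<integral>\<^sup>+x. ennreal (G (Y x)) \<partial>M) \<le> ennreal K"
    using nn_bound[of "\<lambda>t. ennreal (G t)"] K by auto
  show int: "integrable M (\<lambda>x. G (Y x))"
    by (rule integrableI_nonneg) (use le_less_trans[OF nn ennreal_less_top] Gnn in auto)
  have "expectation (\<lambda>x. G (Y x)) = enn2real (\<integral>\<^sup>+x. ennreal (G (Y x)) \<partial>M)"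
    by (rule integral_eq_nn_integral) (use Gnn in auto)
  also have "\<dots> \<le> K"
    using enn2real_mono[OF nn ennreal_less_top] Knn by simp
  finally show "expectation (\<lambda>x. G (Y x)) \<le> K" .
qed


lemma int_G:
  fixes G :: "real \<Rightarrow> real"
  assumes [measurable]: "G \<in> borel_measurable borel" and Bnn: "0 \<le> B" and Gnn: "\<And>t. 0 \<le> G t"
    and Gb: "\<And>t. 0 \<le> t \<Longrightarrow> G t \<le> B * exp (lam/2 * t)"
  shows "integrable M (\<lambda>x. G (Y x))" "expectation (\<lambda>x. G (Y x)) \<le> 2 * B * C / lam"
proof -
  have "(\<integral>\<^sup>+t. ennreal (C * exp (- lam * t)) * indicator {0..} t * ennreal (G t) \<partial>lborel)
     \<le> (\<integral>\<^sup>+t. ennreal (C * B) * (ennreal (exp (- (lam/2) * t)) * indicator {0..} t) \<partial>lborel)"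
  proof (rule nn_integral_mono)
    fix t
    show "ennreal (C * exp (- lam * t)) * indicator {0..} t * ennreal (G t)
      \<le> ennreal (C * B) * (ennreal (exp (- (lam/2) * t)) * indicator {0..} t)"
    proof (cases "0 \<le> t")
      case True
      have "C * exp (- lam * t) * G t \<le> C * exp (- lam * t) * (B * exp (lam/2 * t))"
        using Gb[OF True] Cpos by (intro mult_left_mono) auto
      also have "\<dots> = C * B * (exp (- lam * t) * exp (lam/2 * t))" by (simp add: mult_ac)
      also have "exp (- lam * t) * exp (lam/2 * t) = exp (- (lam/2) * t)"
        by (subst mult_exp_exp) (rule arg_cong[where f=exp], simp add: field_simps)
      finally show ?thesis using True Cpos Gnn[of t] Bnn
        by (simp add: ennreal_mult'[symmetric] ennreal_mult''[symmetric] ennreal_leI)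
    qed simp
  qed
  also have "\<dots> = ennreal (C * B) * ennreal (1 / (lam/2))"
    using exp_int[of "lam/2"] lampos by (subst nn_integral_cmult) auto
  also have "\<dots> = ennreal (2 * B * C / lam)"
    using Cpos Bnn lampos by (simp add: ennreal_mult''[symmetric] field_simps)
  finally have K: "(\<integral>\<^sup>+t. ennreal (C * exp (- lam * t)) * indicator {0..} t * ennreal (G t) \<partial>lborel)
     \<le> ennreal (2 * B * C / lam)" .
  have Knn: "0 \<le> 2 * B * C / lam" using Cpos Bnn lampos by simp
  show "integrable M (\<lambda>x. G (Y x))" "expectation (\<lambda>x. G (Y x)) \<le> 2 * B * C / lam"
    using int_bound[OF assms(1) Knn Gnn K] by auto
qed

lemma tail:
  assumes "0 \<le> a"
  shows "integrable M (\<lambda>x. indicator {..<a} (Y x) :: real)"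
        "expectation (\<lambda>x. indicator {..<a} (Y x) :: real) \<le> C * a"
proof -
  have "(\<integral>\<^sup>+t. ennreal (C * exp (- lam * t)) * indicator {0..} t * ennreal (indicator {..<a} t) \<partial>lborel)
      \<le> (\<integral>\<^sup>+t. ennreal C * indicator {0..a} t \<partial>lborel)"
  proof (rule nn_integral_mono)
    fix t
    show "ennreal (C * exp (- lam * t)) * indicator {0..} t * ennreal (indicator {..<a} t)
         \<le> ennreal C * indicator {0..a} t"
      using Cpos lampos by (auto split: split_indicator intro!: ennreal_leI)
  qed
  also have "\<dots> = ennreal (C * a)"
    using assms Cpos by (subst nn_integral_cmult_indicator) (auto simp: ennreal_mult)
  finally have K: "(\<integral>\<^sup>+t. ennreal (C * exp (- lam * t)) * indicator {0..} t * ennreal (indicator {..<a} t) \<partial>lborel)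
      \<le> ennreal (C * a)" .
  show "integrable M (\<lambda>x. indicator {..<a} (Y x) :: real)"
        "expectation (\<lambda>x. indicator {..<a} (Y x) :: real) \<le> C * a"
    using int_bound[OF _ _ _ K] assms Cpos by auto
qed


lemma int_exp:
  assumes "Re s \<ge> - lam/4"
  shows "integrable M (\<lambda>x. exp (- s * complex_of_real (Y x)))"
proof -
  have "integrable M (\<lambda>x. exp (lam/4 * \<bar>Y x\<bar>))"
  proof (rule int_G[of _ 1])
    fix t :: real assume "0 \<le> t"
    then show "exp (lam / 4 * \<bar>t\<bar>) \<le> 1 * exp (lam / 2 * t)" using lampos by simp
  qed auto
  then show ?thesis
  proof (rule Bochner_Integration.integrable_bound)
    show "AE x in M. norm (exp (- s * complex_of_real (Y x))) \<le> norm (exp (lam/4 * \<bar>Y x\<bar>))"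
      using Ypos
    proof eventually_elim
      case (elim x)
      have "- Re s * Y x \<le> lam/4 * Y x" using assms elim by (intro mult_right_mono) auto
      then show ?case using elim by (simp add: norm_exp_eq_Re)
    qed
  qed simp
qed

lemma mean: "integrable M Y" "expectation Y \<ge> 1 / (4 * C)"
proof -
  have "integrable M (\<lambda>x. \<bar>Y x\<bar>)"
  proof (rule int_G[of _ "2/lam"])
    fix t :: real assume "0 \<le> t"
    then show "\<bar>t\<bar> \<le> 2 / lam * exp (lam / 2 * t)" using lin_le_exp[of t "lam/2"] lampos by simp
  qed (use lampos in auto)
  then show YI: "integrable M Y" using integrable_abs_iff[of Y M] by simp
  define a where "a = 1 / (2 * C)"
  have a: "0 < a" using Cpos by (simp add: a_def)
  note T = tail[OF less_imp_le[OF a]]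
  have "expectation (\<lambda>x. a - a * indicator {..<a} (Y x)) \<le> expectation Y"
  proof (rule integral_mono_AE)
    show "integrable M (\<lambda>x. a - a * indicator {..<a} (Y x))" using T by auto
    show "AE x in M. a - a * indicator {..<a} (Y x) \<le> Y x"
      using Ypos by eventually_elim (auto split: split_indicator)
  qed (fact YI)
  moreover have "expectation (\<lambda>x. a - a * indicator {..<a} (Y x)) = a - a * expectation (\<lambda>x. indicator {..<a} (Y x))"
    using T by (simp add: integral_diff prob_space)
  moreover have "a * expectation (\<lambda>x. indicator {..<a} (Y x)) \<le> a * (C * a)"
    using T a by (intro mult_left_mono) auto
  moreover have "a - a * (C * a) = 1 / (4 * C)" using Cpos by (simp add: a_def field_simps)
  ultimately show "expectation Y \<ge> 1 / (4 * C)" by linarith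
qed

lemma strict:
  assumes sg: "\<sigma> > 0"
  shows "integrable M (\<lambda>x. exp (- \<sigma> * Y x))" "expectation (\<lambda>x. exp (- \<sigma> * Y x)) < 1"
proof -
  define a where "a = 1 / (2 * C)"
  have a: "0 < a" using Cpos by (simp add: a_def)
  note T = tail[OF less_imp_le[OF a]]
  define e where "e = exp (- \<sigma> * a)"
  have e1: "e < 1" using sg a by (simp add: e_def)
  show I: "integrable M (\<lambda>x. exp (- \<sigma> * Y x))"
  proof (rule Bochner_Integration.integrable_bound)
    show "integrable M (\<lambda>x. 1::real)" by simp
    show "AE x in M. norm (exp (- \<sigma> * Y x)) \<le> norm (1::real)"
      using Ypos by eventually_elim (use sg in simp)
  qed simp
  have "expectation (\<lambda>x. exp (- \<sigma> * Y x)) \<le> expectation (\<lambda>x. 1 - (1 - e) * (1 - indicator {..<a} (Y x)))"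
  proof (rule integral_mono_AE)
    show "integrable M (\<lambda>x. 1 - (1 - e) * (1 - indicator {..<a} (Y x)))" using T by auto
    show "AE x in M. exp (- \<sigma> * Y x) \<le> 1 - (1 - e) * (1 - indicator {..<a} (Y x))"
      using Ypos
    proof eventually_elim
      case (elim x)
      show ?case
      proof (cases "Y x < a")
        case True then show ?thesis using elim sg by simp
      next
        case False
        then have "exp (- \<sigma> * Y x) \<le> e" unfolding e_def using sg by simp
        then show ?thesis using False by simp
      qed
    qed
  qed (fact I)
  also have "\<dots> = 1 - (1 - e) * (1 - expectation (\<lambda>x. indicator {..<a} (Y x)))"
    using T by (simp add: integral_diff prob_space)
  also have "\<dots> \<le> 1 - (1 - e) * (1 - C * a)"
    using T e1 by (intro diff_left_mono mult_left_mono) auto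
  also have "\<dots> < 1" using e1 Cpos by (simp add: a_def)
  finally show "expectation (\<lambda>x. exp (- \<sigma> * Y x)) < 1" .
qed

lemma taylor_bound:
  assumes s: "cmod s \<le> lam/4"
  shows "cmod (expectation (\<lambda>x. exp (- s * complex_of_real (Y x))) - 1 + s * complex_of_real (expectation Y))
         \<le> (cmod s)^2 * (128 * C / lam^3)"
proof -
  have Re: "Re s \<ge> - lam/4" using abs_Re_le_cmod[of s] s by linarith
  note IE = int_exp[OF Re]
  note YI = mean(1)
  define G where "G t = t^2 * exp (lam/4 * \<bar>t\<bar>)" for t
  have G4: "G t \<le> 64/lam^2 * exp (lam / 2 * t)" if "0 \<le> t" for t
  proof -
    note 4 = that
    have "t \<le> (8/lam) * exp (lam/8 * t)" using lin_le_exp[of t "lam/8"] 4 lampos by simp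
    then have "t^2 \<le> ((8/lam) * exp (lam/8 * t))^2" using 4 by (intro power_mono) auto
    also have "\<dots> = (64/lam^2) * exp (lam/8 * t)^2"
      by (simp add: power_mult_distrib power2_eq_square)
    also have "exp (lam/8 * t)^2 = exp (2 * (lam/8 * t))" by (rule exp_double[symmetric])
    also have "2 * (lam/8 * t) = lam/4 * t" by simp
    finally have "t^2 * exp (lam/4 * t) \<le> (64/lam^2) * exp (lam/4 * t) * exp (lam/4 * t)"
      by (intro mult_right_mono) auto
    also have "\<dots> = (64/lam^2) * exp (lam/2 * t)"
      by (simp add: mult_exp_exp mult.assoc)
    finally show ?thesis using 4 by (simp add: G_def)
  qed
  have Gm: "G \<in> borel_measurable borel" unfolding G_def[abs_def] by measurable
  have Gnn: "\<And>t. 0 \<le> G t" by (auto simp: G_def)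
  have Bnn: "0 \<le> 64/lam^2" by simp
  note GG = int_G[OF Gm Bnn Gnn G4]
  have eq: "expectation (\<lambda>x. exp (- s * complex_of_real (Y x)) - 1 - (- s * complex_of_real (Y x)))
        = expectation (\<lambda>x. exp (- s * complex_of_real (Y x))) - 1 + s * complex_of_real (expectation Y)"
    using IE YI by (simp add: integral_diff integral_add prob_space)
  have "cmod (expectation (\<lambda>x. exp (- s * complex_of_real (Y x)) - 1 - (- s * complex_of_real (Y x))))
     \<le> expectation (\<lambda>x. cmod (exp (- s * complex_of_real (Y x)) - 1 - (- s * complex_of_real (Y x))))"
    by (rule integral_norm_bound)
  also have "\<dots> \<le> expectation (\<lambda>x. (cmod s)^2 * G (Y x))"
  proof (rule integral_mono)
    show "integrable M (\<lambda>x. cmod (exp (- s * complex_of_real (Y x)) - 1 - (- s * complex_of_real (Y x))))"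
      using IE YI by (intro integrable_norm) auto
    show "integrable M (\<lambda>x. (cmod s)^2 * G (Y x))" using GG by auto
    fix x
    have "cmod (exp (- s * complex_of_real (Y x)) - 1 - (- s * complex_of_real (Y x)))
        \<le> cmod (- s * complex_of_real (Y x)) ^ 2 * exp (cmod (- s * complex_of_real (Y x)))"
      by (rule norm_exp_taylor2)
    also have "\<dots> = (cmod s)^2 * (Y x)^2 * exp (cmod s * \<bar>Y x\<bar>)"
      by (simp add: norm_mult power_mult_distrib)
    also have "\<dots> \<le> (cmod s)^2 * (Y x)^2 * exp (lam/4 * \<bar>Y x\<bar>)"
      using mult_right_mono[OF s abs_ge_zero[of "Y x"]] by (intro mult_left_mono) auto
    finally show "cmod (exp (- s * complex_of_real (Y x)) - 1 - (- s * complex_of_real (Y x)))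
        \<le> (cmod s)^2 * G (Y x)" by (simp add: G_def mult.assoc)
  qed
  also have "\<dots> = (cmod s)^2 * expectation (\<lambda>x. G (Y x))" by simp
  also have "\<dots> \<le> (cmod s)^2 * (2 * (64/lam^2) * C / lam)" using GG(2) by (intro mult_left_mono) auto
  also have "\<dots> = (cmod s)^2 * (128 * C / lam^3)" by (simp add: power3_eq_cube power2_eq_square)
  finally show ?thesis unfolding eq .
qed

lemma sigma_bound:
  assumes s: "\<bar>\<sigma>\<bar> \<le> lam/4"
  shows "integrable M (\<lambda>x. \<bar>1 - exp (- \<sigma> * Y x)\<bar>)"
        "expectation (\<lambda>x. \<bar>1 - exp (- \<sigma> * Y x)\<bar>) \<le> \<bar>\<sigma>\<bar> * (8 * C / lam^2)"
proof -
  define G where "G t = \<bar>t\<bar> * exp (lam/4 * \<bar>t\<bar>)" for t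
  have G4: "G t \<le> 4/lam * exp (lam / 2 * t)" if "0 \<le> t" for t
  proof -
    note 4 = that
    have "t \<le> (4/lam) * exp (lam/4 * t)" using lin_le_exp[of t "lam/4"] 4 lampos by simp
    then have "t * exp (lam/4 * t) \<le> (4/lam) * exp (lam/4 * t) * exp (lam/4 * t)"
      by (intro mult_right_mono) auto
    also have "\<dots> = (4/lam) * exp (lam/2 * t)"
      by (simp add: mult_exp_exp mult.assoc)
    finally show ?thesis using 4 by (simp add: G_def)
  qed
  have Gm: "G \<in> borel_measurable borel" unfolding G_def[abs_def] by measurable
  have Gnn: "\<And>t. 0 \<le> G t" by (auto simp: G_def)
  have Bnn: "0 \<le> 4/lam" using lampos by simp
  note GG = int_G[OF Gm Bnn Gnn G4]
  have pw: "\<bar>1 - exp (- \<sigma> * t)\<bar> \<le> \<bar>\<sigma>\<bar> * G t" for t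
  proof -
    have "\<bar>1 - exp (- \<sigma> * t)\<bar> \<le> \<bar>- \<sigma> * t\<bar> * exp \<bar>- \<sigma> * t\<bar>" by (rule abs_one_minus_exp)
    also have "\<dots> = \<bar>\<sigma>\<bar> * \<bar>t\<bar> * exp \<bar>- \<sigma> * t\<bar>" by (simp add: abs_mult)
    also have e: "\<bar>- \<sigma> * t\<bar> \<le> lam/4 * \<bar>t\<bar>"
      using mult_right_mono[OF s abs_ge_zero[of t]] by (simp add: abs_mult)
    then have "\<bar>\<sigma>\<bar> * \<bar>t\<bar> * exp \<bar>- \<sigma> * t\<bar> \<le> \<bar>\<sigma>\<bar> * \<bar>t\<bar> * exp (lam/4 * \<bar>t\<bar>)"
      by (intro mult_left_mono) auto
    finally show ?thesis by (simp add: G_def mult.assoc)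
  qed
  show I: "integrable M (\<lambda>x. \<bar>1 - exp (- \<sigma> * Y x)\<bar>)"
  proof (rule Bochner_Integration.integrable_bound)
    show "integrable M (\<lambda>x. \<bar>\<sigma>\<bar> * G (Y x))" using GG by auto
    show "AE x in M. norm (\<bar>1 - exp (- \<sigma> * Y x)\<bar>) \<le> norm (\<bar>\<sigma>\<bar> * G (Y x))"
      using pw by (auto simp: G_def)
  qed simp
  have "expectation (\<lambda>x. \<bar>1 - exp (- \<sigma> * Y x)\<bar>) \<le> expectation (\<lambda>x. \<bar>\<sigma>\<bar> * G (Y x))"
    using I GG pw by (intro integral_mono) auto
  also have "\<dots> = \<bar>\<sigma>\<bar> * expectation (\<lambda>x. G (Y x))" by simp
  also have "\<dots> \<le> \<bar>\<sigma>\<bar> * (2 * (4/lam) * C / lam)" using GG(2) by (intro mult_left_mono) auto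
  also have "\<dots> = \<bar>\<sigma>\<bar> * (8 * C / lam^2)" by (simp add: power2_eq_square)
  finally show "expectation (\<lambda>x. \<bar>1 - exp (- \<sigma> * Y x)\<bar>) \<le> \<bar>\<sigma>\<bar> * (8 * C / lam^2)" .
qed


lemma cos_bound:
  assumes A: "A > 0" "A \<le> \<omega>" and be: "0 < \<beta>" "\<beta> \<le> pi/2"
    and small: "C * (\<beta> * (1/(pi*lam) + 2/A)) \<le> 1/2"
  shows "integrable M (\<lambda>x. 1 - cos (\<omega> * Y x))" "expectation (\<lambda>x. 1 - cos (\<omega> * Y x)) \<ge> (1 - cos \<beta>)/2"
proof -
  have om: "\<omega> > 0" using A by simp
  define p where "p = 2*pi/\<omega>"
  have p: "p > 0" using om by (simp add: p_def)
  have wp: "\<omega> * p = 2*pi" using om by (simp add: p_def)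
  define B where "B = {t. cos \<beta> < cos (\<omega>*t)}"
  have Bm[measurable]: "B \<in> sets borel" unfolding B_def by measurable
  define F where "F t = ennreal (exp (-lam*t)) * indicator B t" for t
  have Fm[measurable]: "F \<in> borel_measurable borel" unfolding F_def[abs_def] by measurable
  define J where "J = (\<integral>\<^sup>+t. F t * indicator {0..} t \<partial>lborel)"
  define J0 where "J0 = (\<integral>\<^sup>+t. F t * indicator {0..<p} t \<partial>lborel)"
  define J1 where "J1 = (\<integral>\<^sup>+t. F t * indicator {p..} t \<partial>lborel)"
  have "J \<le> (\<integral>\<^sup>+t. ennreal (exp (-lam*t)) * indicator {0..} t \<partial>lborel)"
    unfolding J_def F_def by (intro nn_integral_mono) (auto split: split_indicator)
  also have "\<dots> = ennreal (1/lam)" using exp_int[OF lampos] by simp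
  finally have Jfin: "J \<le> ennreal (1/lam)" .
  have "J = (\<integral>\<^sup>+t. F t * indicator {0..<p} t + F t * indicator {p..} t \<partial>lborel)"
    unfolding J_def using p
    by (intro nn_integral_cong) (auto split: split_indicator)
  also have "\<dots> = J0 + J1" unfolding J0_def J1_def by (rule nn_integral_add) auto
  finally have JJ: "J = J0 + J1" .
  have "J1 = ennreal \<bar>1\<bar> * (\<integral>\<^sup>+x. F (p + 1 * x) * indicator {p..} (p + 1 * x) \<partial>lborel)"
    unfolding J1_def by (rule nn_integral_real_affine) auto
  also have "\<dots> = (\<integral>\<^sup>+x. ennreal (exp (-lam*p)) * (F x * indicator {0..} x) \<partial>lborel)"
  proof -
    have "F (p + x) * indicator {p..} (p + x) = ennreal (exp (-lam*p)) * (F x * indicator {0..} x)" for x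
    proof -
      have "\<omega> * (p + x) = \<omega> * x + 2*pi" using wp by (simp add: algebra_simps)
      then have "indicator B (p + x) = (indicator B x :: ennreal)" by (simp add: B_def indicator_def)
      moreover have "ennreal (exp (-lam*(p+x))) = ennreal (exp (-lam*p)) * ennreal (exp (-lam*x))"
      proof -
        have "exp (-lam*(p+x)) = exp (-lam*p) * exp (-lam*x)"
          by (subst mult_exp_exp) (simp add: algebra_simps)
        then show ?thesis by (simp add: ennreal_mult[symmetric])
      qed
      ultimately show ?thesis by (simp add: F_def indicator_def mult_ac)
    qed
    then show ?thesis by simp
  qed
  also have "\<dots> = ennreal (exp (-lam*p)) * J" unfolding J_def by (rule nn_integral_cmult) auto
  finally have J1eq: "J1 = ennreal (exp (-lam*p)) * J" .
  have "J0 \<le> (\<integral>\<^sup>+t. indicator {0..\<beta>/\<omega>} t + indicator {(2*pi-\<beta>)/\<omega>..p} t \<partial>lborel)"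
    unfolding J0_def
  proof (intro nn_integral_mono)
    fix t
    show "F t * indicator {0..<p} t \<le> indicator {0..\<beta>/\<omega>} t + indicator {(2*pi-\<beta>)/\<omega>..p} t"
    proof (cases "t \<in> B \<and> 0 \<le> t \<and> t < p")
      case True
      have tB: "t \<in> B" and t0: "0 \<le> t" and tp: "t < p" using True by auto
      have "0 \<le> \<omega>*t" using mult_nonneg_nonneg[OF less_imp_le[OF om] t0] .
      moreover have "\<omega>*t < \<omega>*p" using mult_strict_left_mono[OF tp om] .
      moreover have "cos \<beta> < cos (\<omega>*t)" using tB unfolding B_def by simp
      ultimately have "0 \<le> \<omega>*t" "\<omega>*t < 2*pi" "cos \<beta> < cos (\<omega>*t)" using wp by auto
      from cos_window[OF be this] have "t \<le> \<beta>/\<omega> \<or> (2*pi-\<beta>)/\<omega> \<le> t"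
        using om by (auto simp: field_simps)
      moreover have e1: "exp (-lam*t) \<le> 1" using True lampos by simp
      then have "ennreal (exp (-lam*t)) \<le> 1" by (simp add: ennreal_leI)
      moreover have "ennreal (exp (-lam*t)) \<le> ennreal 2" using e1 by (intro ennreal_leI) linarith
      then have "ennreal (exp (-lam*t)) \<le> 2" by simp
      ultimately show ?thesis using True by (auto simp: F_def split: split_indicator)
    qed (auto simp: F_def split: split_indicator)
  qed
  also have "\<dots> = ennreal (\<beta>/\<omega>) + ennreal (p - (2*pi-\<beta>)/\<omega>)"
    using be om p by (subst nn_integral_add) (auto simp: p_def field_simps)
  also have "\<dots> = ennreal (2*\<beta>/\<omega>)"
    using be om by (simp add: p_def ennreal_plus[symmetric] field_simps del: ennreal_plus)
  finally have J0b: "J0 \<le> ennreal (2*\<beta>/\<omega>)" .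
  define j where "j = enn2real J"
  define j0 where "j0 = enn2real J0"
  define q where "q = exp (-lam*p)"
  have "J < top" using Jfin ennreal_less_top[of "1/lam"] by (rule le_less_trans)
  then have Jj: "J = ennreal j" unfolding j_def by simp
  have "J0 < top" using J0b ennreal_less_top[of "2*\<beta>/\<omega>"] by (rule le_less_trans)
  then have J0j: "J0 = ennreal j0" unfolding j0_def by simp
  have j00: "0 \<le> j0" by (simp add: j0_def)
  have "ennreal j0 \<le> ennreal (2*\<beta>/\<omega>)" using J0b J0j by simp
  then have j01: "j0 \<le> 2*\<beta>/\<omega>" using be om by (subst (asm) ennreal_le_iff) auto
  note j0 = j00 j01
  have jnn: "0 \<le> j" by (simp add: j_def)
  have q: "0 < q" by (simp add: q_def)
  have e1: "ennreal j = ennreal j0 + ennreal (q * j)" using JJ J1eq Jj J0j q jnn by (simp add: q_def ennreal_mult)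
  have "ennreal j = ennreal (j0 + q * j)" using e1 j0 q jnn by (subst ennreal_plus) auto
  then have jeq: "j = j0 + q * j" using jnn j0 q by (subst (asm) ennreal_inj) auto
  have "q * (1 + lam*p) \<le> 1"
  proof -
    have "1 + lam*p \<le> exp (lam*p)" by (rule exp_ge_add_one_self)
    then have "q * (1 + lam*p) \<le> q * exp (lam*p)" using q by (intro mult_left_mono) auto
    also have "\<dots> = 1" by (simp add: q_def mult_exp_exp)
    finally show ?thesis .
  qed
  note qb = this
  have "j * (1 - q) = j - q*j" by (simp add: algebra_simps)
  then have j0e: "j0 = j * (1 - q)" using jeq by linarith
  have "j * (lam*p) = j * ((1 + lam*p) - 1)" by simp
  also have "\<dots> \<le> j * ((1 + lam*p) - q * (1 + lam*p))" using qb jnn by (intro mult_left_mono) auto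
  also have "\<dots> = j0 * (1 + lam*p)" unfolding j0e by (simp add: algebra_simps)
  finally have "j * (lam*p) \<le> j0 * (1 + lam*p)" .
  then have "j \<le> j0 * (1 + lam*p) / (lam*p)" using lampos p by (simp add: field_simps)
  also have "\<dots> \<le> (2*\<beta>/\<omega>) * (1 + lam*p) / (lam*p)"
    using j0 lampos p by (intro divide_right_mono mult_right_mono) auto
  also have "\<dots> = 2*\<beta>/\<omega> + \<beta>/(pi*lam)" using om lampos by (simp add: p_def field_simps)
  also have "\<dots> \<le> 2*\<beta>/A + \<beta>/(pi*lam)" using A be by (simp add: frac_le)
  finally have jb: "j \<le> \<beta> * (1/(pi*lam) + 2/A)" by (simp add: field_simps)
  have "(\<integral>\<^sup>+t. ennreal (C * exp (- lam * t)) * indicator {0..} t * ennreal (indicator B t) \<partial>lborel)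
      = (\<integral>\<^sup>+t. ennreal C * (F t * indicator {0..} t) \<partial>lborel)"
    using Cpos by (intro nn_integral_cong) (simp add: F_def ennreal_mult mult_ac indicator_def)
  also have "\<dots> = ennreal C * J" unfolding J_def by (rule nn_integral_cmult) auto
  also have "\<dots> \<le> ennreal (C * (\<beta> * (1/(pi*lam) + 2/A)))"
    using Jj jb Cpos jnn by (simp add: ennreal_mult[symmetric] ennreal_leI)
  finally have KB: "(\<integral>\<^sup>+t. ennreal (C * exp (- lam * t)) * indicator {0..} t * ennreal (indicator B t) \<partial>lborel)
      \<le> ennreal (C * (\<beta> * (1/(pi*lam) + 2/A)))" .
  have Knn: "0 \<le> C * (\<beta> * (1/(pi*lam) + 2/A))" using Cpos be A lampos by simp
  note IB = int_bound[OF _ Knn _ KB]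
  have IB1: "integrable M (\<lambda>x. indicator B (Y x) :: real)" using IB by simp
  have IB2': "expectation (\<lambda>x. indicator B (Y x) :: real) \<le> C * (\<beta> * (1/(pi*lam) + 2/A))" using IB by simp
  have IB2: "expectation (\<lambda>x. indicator B (Y x) :: real) \<le> 1/2" by (rule order_trans[OF IB2' small])
  show I: "integrable M (\<lambda>x. 1 - cos (\<omega> * Y x))"
  proof (rule Bochner_Integration.integrable_bound)
    show "integrable M (\<lambda>x. 2::real)" by simp
    show "AE x in M. norm (1 - cos (\<omega> * Y x)) \<le> norm (2::real)"
      by (intro AE_I2) (auto simp: abs_le_iff)
  qed simp
  define \<eta> where "\<eta> = 1 - cos \<beta>"
  have "expectation (\<lambda>x. \<eta> * (1 - indicator B (Y x))) \<le> expectation (\<lambda>x. 1 - cos (\<omega> * Y x))"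
  proof (rule integral_mono)
    show "integrable M (\<lambda>x. \<eta> * (1 - indicator B (Y x)))" using IB1 by auto
    fix x
    show "\<eta> * (1 - indicator B (Y x)) \<le> 1 - cos (\<omega> * Y x)"
      by (cases "Y x \<in> B") (auto simp: B_def \<eta>_def)
  qed (fact I)
  moreover have "expectation (\<lambda>x. \<eta> * (1 - indicator B (Y x))) = \<eta> * expectation (\<lambda>x. 1 - indicator B (Y x) :: real)"
    by (rule integral_mult_right_zero)
  moreover have "expectation (\<lambda>x. 1 - indicator B (Y x) :: real) = 1 - expectation (\<lambda>x. indicator B (Y x) :: real)"
  proof -
    have "integrable M (\<lambda>x. 1::real)" by simp
    from Bochner_Integration.integral_diff[OF this IB1] show ?thesis by (simp add: prob_space)
  qed
  moreover have "\<eta> * (1 - expectation (\<lambda>x. indicator B (Y x))) \<ge> \<eta> * (1/2)"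
    using IB2 by (intro mult_left_mono) (auto simp: \<eta>_def)
  ultimately have "expectation (\<lambda>x. 1 - cos (\<omega> * Y x)) \<ge> \<eta>/2" by simp
  then show "expectation (\<lambda>x. 1 - cos (\<omega> * Y x)) \<ge> (1 - cos \<beta>)/2"
    by (simp add: \<eta>_def)
qed


end

context lem9 begin

lemma main:
  assumes d: "0 < \<delta>" "\<delta> \<le> lam/4" "\<delta> * (128 * C / lam^3) \<le> 1/(8*C)"
    and be: "0 < \<beta>" "\<beta> \<le> pi/2" "C * (\<beta> * (1/(pi*lam) + 2/(\<delta>/2))) \<le> 1/2"
    and g: "0 < \<gamma>" "\<gamma> \<le> \<delta>/2" "\<gamma> * (8 * C / lam^2) \<le> (1 - cos \<beta>)/4"
    and e: "0 < \<epsilon>" "\<epsilon> \<le> 1/(8*C)" "\<epsilon> \<le> (1 - cos \<beta>)/4"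
  shows "(\<forall>s::complex. s \<noteq> 0 \<and> Re s \<ge> - \<gamma> \<longrightarrow>
          expectation (\<lambda>x. exp (- s * complex_of_real (Y x))) \<noteq> 1) \<and>
      (\<forall>s::complex. \<bar>Re s\<bar> \<le> \<gamma> \<longrightarrow>
          cmod (expectation (\<lambda>x. exp (- s * complex_of_real (Y x))) - 1)
            \<ge> \<epsilon> * min (cmod s) 1)"
proof -
  have second: "cmod (expectation (\<lambda>x. exp (- s * complex_of_real (Y x))) - 1) \<ge> \<epsilon> * min (cmod s) 1"
    if sg: "\<bar>Re s\<bar> \<le> \<gamma>" for s :: complex
  proof (cases "cmod s \<le> \<delta>")
    case True
    define \<phi> where "\<phi> = expectation (\<lambda>x. exp (- s * complex_of_real (Y x)))"
    define EY where "EY = expectation Y"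
    have T: "cmod (\<phi> - 1 + s * complex_of_real EY) \<le> (cmod s)^2 * (128 * C / lam^3)"
      unfolding \<phi>_def EY_def using True d by (intro taylor_bound) auto
    have "(cmod s)^2 * (128 * C / lam^3) \<le> cmod s * (\<delta> * (128 * C / lam^3))"
    proof -
      have K: "0 \<le> 128 * C / lam^3" using Cpos lampos by simp
      have "cmod s * (cmod s * (128 * C / lam^3)) \<le> cmod s * (\<delta> * (128 * C / lam^3))"
        using True K by (intro mult_left_mono mult_right_mono) auto
      then show ?thesis by (simp add: power2_eq_square mult.assoc)
    qed
    also have "\<dots> \<le> cmod s * (1/(8*C))" using d by (intro mult_left_mono) auto
    finally have T2: "cmod (\<phi> - 1 + s * complex_of_real EY) \<le> cmod s * (1/(8*C))" using T by linarith
    have EYb: "EY \<ge> 1/(4*C)" unfolding EY_def by (rule mean)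
    have EY0: "0 \<le> EY" using EYb Cpos by (smt (verit) divide_pos_pos)
    have "cmod (s * complex_of_real EY) = cmod s * EY" using EY0
      by (simp add: norm_mult)
    also have "\<dots> \<ge> cmod s * (1/(4*C))" using EYb by (intro mult_left_mono) auto
    finally have "cmod (s * complex_of_real EY) \<ge> cmod s * (1/(4*C))" .
    moreover have "cmod (s * complex_of_real EY) \<le> cmod (\<phi> - 1 + s * complex_of_real EY) + cmod (\<phi> - 1)"
      using norm_triangle_ineq4[of "\<phi> - 1 + s * complex_of_real EY" "\<phi> - 1"] by simp
    ultimately have "cmod (\<phi> - 1) \<ge> cmod s * (1/(4*C)) - cmod s * (1/(8*C))" using T2 by linarith
    also have "cmod s * (1/(4*C)) - cmod s * (1/(8*C)) = cmod s * (1/(8*C))" using Cpos by (simp add: field_simps)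
    also have "\<dots> \<ge> \<epsilon> * cmod s" using e mult_right_mono[OF e(2) norm_ge_zero[of s]] by (simp add: mult.commute)
    also have "\<epsilon> * cmod s \<ge> \<epsilon> * min (cmod s) 1" using e by (intro mult_left_mono) auto
    finally show ?thesis unfolding \<phi>_def .
  next
    case False
    define \<sigma> where "\<sigma> = Re s"
    define \<omega> where "\<omega> = \<bar>Im s\<bar>"
    have "cmod s \<le> \<bar>Re s\<bar> + \<bar>Im s\<bar>" by (rule cmod_le)
    then have om: "\<delta>/2 \<le> \<omega>" using False sg g by (simp add: \<omega>_def)
    have sig: "\<bar>\<sigma>\<bar> \<le> lam/4" "\<bar>\<sigma>\<bar> \<le> \<gamma>" using sg g d by (auto simp: \<sigma>_def)
    have Re: "Re s \<ge> - lam/4" using sig by (auto simp: \<sigma>_def)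
    note IE = int_exp[OF Re]
    note CB = cos_bound[of "\<delta>/2" \<omega> \<beta>]
    have C1: "integrable M (\<lambda>x. 1 - cos (\<omega> * Y x))" and C2: "expectation (\<lambda>x. 1 - cos (\<omega> * Y x)) \<ge> (1 - cos \<beta>)/2"
      using CB om d be by auto
    note SB = sigma_bound[OF sig(1)]
    have reexp: "Re (exp (- s * complex_of_real y)) = exp (- \<sigma> * y) * cos (\<omega> * y)" for y
    proof -
      have "cos (- (Im s * y)) = cos (\<omega> * y)"
        by (cases "Im s \<ge> 0") (auto simp: \<omega>_def)
      then show ?thesis by (simp add: Re_exp \<sigma>_def)
    qed
    have RI: "integrable M (\<lambda>x. Re (exp (- s * complex_of_real (Y x))))" using IE by auto
    have "expectation (\<lambda>x. (1 - cos (\<omega> * Y x)) - \<bar>1 - exp (- \<sigma> * Y x)\<bar>)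
        \<le> expectation (\<lambda>x. 1 - Re (exp (- s * complex_of_real (Y x))))"
    proof (rule integral_mono)
      show "integrable M (\<lambda>x. (1 - cos (\<omega> * Y x)) - \<bar>1 - exp (- \<sigma> * Y x)\<bar>)" using C1 SB by auto
      show "integrable M (\<lambda>x. 1 - Re (exp (- s * complex_of_real (Y x))))" using RI by auto
      fix x
      have "\<bar>(1 - exp (- \<sigma> * Y x)) * cos (\<omega> * Y x)\<bar> \<le> \<bar>1 - exp (- \<sigma> * Y x)\<bar> * 1"
        unfolding abs_mult by (intro mult_left_mono) auto
      then show "(1 - cos (\<omega> * Y x)) - \<bar>1 - exp (- \<sigma> * Y x)\<bar> \<le> 1 - Re (exp (- s * complex_of_real (Y x)))"
        unfolding reexp by (auto simp: abs_le_iff algebra_simps)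
    qed
    moreover have "expectation (\<lambda>x. (1 - cos (\<omega> * Y x)) - \<bar>1 - exp (- \<sigma> * Y x)\<bar>)
       = expectation (\<lambda>x. 1 - cos (\<omega> * Y x)) - expectation (\<lambda>x. \<bar>1 - exp (- \<sigma> * Y x)\<bar>)"
      using C1 SB by (simp add: integral_diff)
    moreover have "expectation (\<lambda>x. 1 - Re (exp (- s * complex_of_real (Y x))))
       = 1 - Re (expectation (\<lambda>x. exp (- s * complex_of_real (Y x))))"
      using RI IE by (simp add: integral_diff prob_space)
    moreover have "\<bar>\<sigma>\<bar> * (8 * C / lam^2) \<le> \<gamma> * (8 * C / lam^2)"
      using sig Cpos lampos by (intro mult_right_mono) auto
    moreover have "Re (1 - expectation (\<lambda>x. exp (- s * complex_of_real (Y x))))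
        \<le> cmod (expectation (\<lambda>x. exp (- s * complex_of_real (Y x))) - 1)"
      by (metis abs_Re_le_cmod abs_le_D1 norm_minus_commute)
    ultimately have "cmod (expectation (\<lambda>x. exp (- s * complex_of_real (Y x))) - 1) \<ge> (1 - cos \<beta>)/4"
      using C2 SB(2) g by simp
    moreover have "\<epsilon> * min (cmod s) 1 \<le> \<epsilon>" using e by (simp add: mult_left_le)
    ultimately show ?thesis using e by linarith
  qed
  have first: "expectation (\<lambda>x. exp (- s * complex_of_real (Y x))) \<noteq> 1"
    if s: "s \<noteq> 0" "Re s \<ge> - \<gamma>" for s :: complex
  proof (cases "Re s \<le> \<gamma>")
    case True
    then have "\<bar>Re s\<bar> \<le> \<gamma>" using s by auto
    from second[OF this] have "cmod (expectation (\<lambda>x. exp (- s * complex_of_real (Y x))) - 1) > 0"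
      using s e by (smt (verit) min_def mult_pos_pos zero_less_norm_iff)
    then show ?thesis by auto
  next
    case False
    then have sp: "Re s > 0" using g by simp
    note ST = strict[OF sp]
    have Re: "Re s \<ge> - lam/4" using sp lampos by simp
    have "cmod (expectation (\<lambda>x. exp (- s * complex_of_real (Y x))))
        \<le> expectation (\<lambda>x. cmod (exp (- s * complex_of_real (Y x))))"
      by (rule integral_norm_bound)
    also have "\<dots> = expectation (\<lambda>x. exp (- Re s * Y x))"
      by (simp add: norm_exp_eq_Re)
    also have "\<dots> < 1" using ST by simp
    finally show ?thesis by auto
  qed
  show ?thesis
  proof (intro conjI allI impI)
    fix s :: complex assume "s \<noteq> 0 \<and> - \<gamma> \<le> Re s"
    then show "expectation (\<lambda>x. exp (- s * complex_of_real (Y x))) \<noteq> 1" using first by blast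
  next
    fix s :: complex assume "\<bar>Re s\<bar> \<le> \<gamma>"
    then show "\<epsilon> * min (cmod s) 1 \<le> cmod (expectation (\<lambda>x. exp (- s * complex_of_real (Y x))) - 1)"
      by (rule second)
  qed
qed

end

theorem lemma9:
  fixes C lam :: real
  assumes "C > 0" and "lam > 0"
  shows "\<exists>\<epsilon>>0. \<exists>\<gamma>>0. \<exists>I::real>0.
    \<forall>(M::'a measure) (Y::'a \<Rightarrow> real) (f::real \<Rightarrow> real).
      prob_space M \<and> distributed M lborel Y (\<lambda>t. ennreal (f t)) \<and>
      (\<forall>t. 0 \<le> f t) \<and>
      (AE x in M. 0 \<le> Y x) \<and>
      (\<forall>t\<ge>0. f t \<le> C * exp (- lam * t))
      \<longrightarrow>
      (\<forall>s::complex. s \<noteq> 0 \<and> Re s \<ge> - \<gamma> \<longrightarrow>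
          prob_space.expectation M (\<lambda>x. exp (- s * complex_of_real (Y x))) \<noteq> 1) \<and>
      (\<forall>s::complex. \<bar>Re s\<bar> \<le> \<gamma> \<longrightarrow>
          cmod (prob_space.expectation M (\<lambda>x. exp (- s * complex_of_real (Y x))) - 1)
            \<ge> \<epsilon> * min (cmod s) 1)"
proof -
  have Cp: "C > 0" and lp: "lam > 0" using assms by auto
  define K2 where "K2 = 128 * C / lam^3"
  have K2: "K2 > 0" using Cp lp by (simp add: K2_def)
  define \<delta> where "\<delta> = min (lam/4) (1/(8*C*K2))"
  have d1: "0 < \<delta>" using Cp lp K2 by (simp add: \<delta>_def)
  have d2: "\<delta> \<le> lam/4" by (simp add: \<delta>_def)
  have "\<delta> \<le> 1/(8*C*K2)" by (simp add: \<delta>_def)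
  then have "\<delta> * K2 \<le> 1/(8*C*K2) * K2" using K2 by (intro mult_right_mono) auto
  then have d3: "\<delta> * (128 * C / lam^3) \<le> 1/(8*C)" using K2 Cp by (simp add: K2_def[symmetric])
  define S where "S = 1/(pi*lam) + 2/(\<delta>/2)"
  have "1/(pi*lam) > 0" using lp by simp
  moreover have "2/(\<delta>/2) > 0" using d1 by simp
  ultimately have S: "S > 0" unfolding S_def by linarith
  define \<beta> where "\<beta> = min (pi/2) (1/(2*C*S))"
  have b1: "0 < \<beta>" using Cp S by (simp add: \<beta>_def)
  have b2: "\<beta> \<le> pi/2" by (simp add: \<beta>_def)
  have "\<beta> \<le> 1/(2*C*S)" by (simp add: \<beta>_def)
  then have "C * (\<beta> * S) \<le> C * (1/(2*C*S) * S)" using Cp S by (intro mult_left_mono mult_right_mono) auto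
  then have b3': "C * (\<beta> * S) \<le> 1/2" using Cp S by simp
  then have b3: "C * (\<beta> * (1/(pi*lam) + 2/(\<delta>/2))) \<le> 1/2" unfolding S_def .
  have cb: "cos \<beta> < 1" using cos_monotone_0_pi[of 0 \<beta>] b1 b2 by simp
  define \<eta> where "\<eta> = 1 - cos \<beta>"
  have eta: "\<eta> > 0" using cb by (simp add: \<eta>_def)
  define K1 where "K1 = 8 * C / lam^2"
  have K1: "K1 > 0" using Cp lp by (simp add: K1_def)
  define \<gamma> where "\<gamma> = min (\<delta>/2) (\<eta>/4/K1)"
  have g1: "0 < \<gamma>" using d1 eta K1 by (simp add: \<gamma>_def)
  have g2: "\<gamma> \<le> \<delta>/2" by (simp add: \<gamma>_def)
  have "\<gamma> \<le> \<eta>/4/K1" by (simp add: \<gamma>_def)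
  then have "\<gamma> * K1 \<le> \<eta>/4/K1 * K1" using K1 by (intro mult_right_mono) auto
  then have g3: "\<gamma> * (8 * C / lam^2) \<le> (1 - cos \<beta>)/4" using K1 by (simp add: K1_def[symmetric] \<eta>_def)
  define \<epsilon> where "\<epsilon> = min (1/(8*C)) (\<eta>/4)"
  have e1: "0 < \<epsilon>" using Cp eta by (simp add: \<epsilon>_def)
  have e2: "\<epsilon> \<le> 1/(8*C)" by (simp add: \<epsilon>_def)
  have "\<epsilon> \<le> \<eta>/4" unfolding \<epsilon>_def by (rule min.cobounded2)
  then have e3: "\<epsilon> \<le> (1 - cos \<beta>)/4" by (simp only: \<eta>_def)
  show ?thesis
    apply (rule exI[of _ \<epsilon>], rule conjI[OF e1])
    apply (rule exI[of _ \<gamma>], rule conjI[OF g1])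
    apply (rule exI[of _ "1::real"], rule conjI, simp)
    apply (intro allI impI)
    subgoal premises H for M Y f
    proof -
      have L: "lem9 M Y f C lam"
        by (intro lem9.intro lem9_axioms.intro) (use H Cp lp in auto)
      show ?thesis by (rule lem9.main[OF L d1 d2 d3 b1 b2 b3 g1 g2 g3 e1 e2 e3])
    qed
    done
qed

end
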